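(* Let $m\ge n\ge1$. Let $\mathcal E=\{\sqrt{p_i}U_i\mid1\le i\le N\}$ with each $U_i$ unitary on $\mathcal H_{2^m}$ and $\sum_ip_i=1$, let $\rho_a$ be an $(m-n)$-qubit density matrix and $\rho_0$ an $m$-qubit density matrix, and suppose $[\mathcal H_{2^n},\mathcal E,\rho_a,\rho_0]$ is a private quantum channel. Then there exist unitaries $U_1',\dots,U_N'$ on $\mathcal H_{2^{n+m}}$ such that, with $\mathcal E'=\{\sqrt{p_i}U_i'\mid1\le i\le N\}$ (the same probabilities $p_i$), $[\mathcal C_{2^{2n}},\mathcal E',\rho_a,\tilde I_{2^n}\otimes\rho_0]$ is a private quantum channel.
   Context: $\mathcal{H}_{2^k}$ denotes the Hilbert space of $k$ qubits, with computational basis $|0\rangle,\dots,|2^k-1\rangle$; $\tilde I_{M}=\frac1M I_M$. $\mathcal C_k=\{|i\rangle\mid 0\le i\le k-1\}$ is the set of the first $k$ computational basis states (so $\mathcal C_{2^{2n}}$ is the set of all $2n$-qubit classical basis states). Definition (private quantum channel, PQC): let $\mathcal S\subseteq\mathcal H_{2^n}$ be a set of pure $n$-qubit states, $\mathcal E=\{\sqrt{p_i}U_i\mid1\le i\le N\}$ with each $U_i$ unitary on $\mathcal H_{2^m}$, $p_i\ge0$, $\sum_ip_i=1$, $\rho_a$ an $(m-n)$-qubit density matrix, and $\rho_0$ an $m$-qubit density matrix. Then $[\mathcal S,\mathcal E,\rho_a,\rho_0]$ is a PQC iff for all $|\phi\rangle\in\mathcal S$, $\sum_{i=1}^Np_iU_i(|\phi\rangle\langle\phi|\otimes\rho_a)U_i^\dagger=\rho_0$.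 (If $m=n$ the ancilla is absent.) *)

theory Defs
  imports Complex_Main "Jordan_Normal_Form.Matrix"
begin

text \<open>A k-qubit space H_{2^k} is modelled by complex vectors of dimension 2^k;
  operators on it are complex 2^k x 2^k matrices.\<close>

definition adj :: "complex mat \<Rightarrow> complex mat" where
  "adj A = mat (dim_col A) (dim_row A) (\<lambda>(i,j). cnj (A $$ (j,i)))"

definition trace_mat :: "complex mat \<Rightarrow> complex" where
  "trace_mat A = (\<Sum>i<dim_row A. A $$ (i,i))"

text \<open>Kronecker (tensor) product; the first factor carries the high-order index.\<close>
definition kron :: "complex mat \<Rightarrow> complex mat \<Rightarrow> complex mat" (infixl \<open>\<otimes>\<^sub>k\<close> 71) where
  "kron A B = mat (dim_row A * dim_row B) (dim_col A * dim_col B)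
     (\<lambda>(i,j). A $$ (i div dim_row B, j div dim_col B) * B $$ (i mod dim_row B, j mod dim_col B))"

definition proj :: "complex vec \<Rightarrow> complex mat" where
  "proj v = mat (dim_vec v) (dim_vec v) (\<lambda>(i,j). v $ i * cnj (v $ j))"

definition unitary :: "nat \<Rightarrow> complex mat \<Rightarrow> bool" where
  "unitary d U \<longleftrightarrow> U \<in> carrier_mat d d \<and> adj U * U = 1\<^sub>m d \<and> U * adj U = 1\<^sub>m d"

definition density :: "nat \<Rightarrow> complex mat \<Rightarrow> bool" where
  "density k \<rho> \<longleftrightarrow> \<rho> \<in> carrier_mat (2^k) (2^k) \<and> adj \<rho> = \<rho> \<and>
     (\<forall>v \<in> carrier_vec (2^k). 0 \<le> Re (\<Sum>i<2^k. \<Sum>j<2^k. cnj (v $ i) * \<rho> $$ (i,j) * v $ j)) \<and>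
     trace_mat \<rho> = 1"

definition pure_states :: "nat \<Rightarrow> complex vec set" where
  "pure_states k = {v \<in> carrier_vec (2^k). (\<Sum>i<2^k. (cmod (v $ i))^2) = 1}"

definition comp_basis :: "nat \<Rightarrow> nat \<Rightarrow> complex vec set" where
  "comp_basis d k = {unit_vec (2^d) i | i. i < k}"

definition nid :: "nat \<Rightarrow> complex mat" where
  "nid M = (1 / of_nat M) \<cdot>\<^sub>m 1\<^sub>m M"

text \<open>Output of the channel: sum_{i=1}^N p_i U_i X U_i^dagger (indices 0..N-1).\<close>
definition chan :: "nat \<Rightarrow> (nat \<Rightarrow> real) \<Rightarrow> (nat \<Rightarrow> complex mat) \<Rightarrow> complex mat \<Rightarrow> complex mat" where
  "chan N p U X = mat (dim_row X) (dim_col X)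
     (\<lambda>(r,c). \<Sum>i<N. complex_of_real (p i) * (U i * X * adj (U i)) $$ (r,c))"

text \<open>Private quantum channel [S, E, rho_a, rho_0] with S a set of n-qubit pure states,
  E = {sqrt(p_i) U_i | i < N}, U_i unitaries on m qubits, rho_a an (m-n)-qubit
  density matrix, rho_0 an m-qubit density matrix.\<close>
definition PQC :: "nat \<Rightarrow> nat \<Rightarrow> complex vec set \<Rightarrow> nat \<Rightarrow> (nat \<Rightarrow> real) \<Rightarrow>
    (nat \<Rightarrow> complex mat) \<Rightarrow> complex mat \<Rightarrow> complex mat \<Rightarrow> bool" where
  "PQC m n S N p U \<rho>a \<rho>0 \<longleftrightarrow>
     n \<le> m \<and> S \<subseteq> pure_states n \<and>
     (\<forall>i<N. 0 \<le> p i \<and> unitary (2^m) (U i)) \<and> (\<Sum>i<N. p i) = 1 \<and>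
     density (m - n) \<rho>a \<and> density m \<rho>0 \<and>
     (\<forall>\<phi>\<in>S. chan N p U (proj \<phi> \<otimes>\<^sub>k \<rho>a) = \<rho>0)"

end

theory Submission
  imports Defs "Jordan_Normal_Form.Determinant"
begin

lemma sum_split: fixes f :: "nat \<Rightarrow> 'a::comm_monoid_add" shows "(\<Sum>t<a*b. f t) = (\<Sum>u<a. \<Sum>s<b. f (u*b+s))"
proof -
  have "(\<Sum>t<a*b. f t) = (\<Sum>u<a. sum f {u*b..<u*b+b})"
    using sum.nat_group[of f b a] by simp
  also have "\<dots> = (\<Sum>u<a. \<Sum>s<b. f (u*b+s))"
  proof (rule sum.cong[OF refl])
    fix u
    have "sum f {u*b..<u*b+b} = sum f {0+u*b..<b+u*b}" by (simp add: add.commute)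
    also have "\<dots> = (\<Sum>s\<in>{0..<b}. f (s+u*b))" by (rule sum.shift_bounds_nat_ivl)
    finally show "sum f {u*b..<u*b+b} = (\<Sum>s<b. f (u*b+s))" by (simp add: atLeast0LessThan add.commute)
  qed
  finally show ?thesis .
qed

lemma mult_entry: "i < dim_row A \<Longrightarrow> j < dim_col B \<Longrightarrow> dim_col A = dim_row B \<Longrightarrow>
  (A*B)$$(i,j) = (\<Sum>t<dim_col A. A$$(i,t)*B$$(t,j))"
  by (simp add: scalar_prod_def atLeast0LessThan)

lemma adj_dim[simp]: "dim_row (adj A) = dim_col A" "dim_col (adj A) = dim_row A"
  by (auto simp: adj_def)

lemma adj_index[simp]: "i < dim_col A \<Longrightarrow> j < dim_row A \<Longrightarrow> adj A $$ (i,j) = cnj (A$$(j,i))"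
  by (simp add: adj_def)

lemma adj_carrier: "A \<in> carrier_mat a b \<Longrightarrow> adj A \<in> carrier_mat b a"
  by auto

lemma adj_adj: "adj (adj A) = A"
  by (rule eq_matI) auto

lemma adj_one[simp]: "adj (1\<^sub>m k) = 1\<^sub>m k"
  by (rule eq_matI) auto

lemma adj_mult: "A \<in> carrier_mat a b \<Longrightarrow> B \<in> carrier_mat b c \<Longrightarrow> adj (A*B) = adj B * adj A"
  by (rule eq_matI) (auto simp: scalar_prod_def mult.commute intro!: sum.cong)

lemma kron_dim[simp]: "dim_row (A \<otimes>\<^sub>k B) = dim_row A * dim_row B" "dim_col (A \<otimes>\<^sub>k B) = dim_col A * dim_col B"
  by (auto simp: kron_def)

lemma kron_index: "i < dim_row A * dim_row B \<Longrightarrow> j < dim_col A * dim_col B \<Longrightarrow>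
  (A \<otimes>\<^sub>k B) $$ (i,j) = A $$ (i div dim_row B, j div dim_col B) * B $$ (i mod dim_row B, j mod dim_col B)"
  by (simp add: kron_def)

lemma kron_carrier: "A \<in> carrier_mat a1 a2 \<Longrightarrow> B \<in> carrier_mat b1 b2 \<Longrightarrow> A \<otimes>\<^sub>k B \<in> carrier_mat (a1*b1) (a2*b2)"
  by auto

lemma div_mod_bounds: "(i::nat) < a*b \<Longrightarrow> i div b < a \<and> i mod b < b"
  by (metis less_mult_imp_div_less mod_less_divisor mult_0_right not_less_zero zero_less_iff_neq_zero)

lemma idx_bound: "(u::nat) < a \<Longrightarrow> s < b \<Longrightarrow> u*b+s < a*b"
proof -
  assume u: "u < a" and s: "s < b"
  have "u*b+s < u*b + b" using s by simp
  also have "\<dots> = Suc u * b" by simp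
  also have "\<dots> \<le> a*b" using u by (intro mult_le_mono1) simp
  finally show ?thesis .
qed

lemma kron_mult:
  assumes A: "A \<in> carrier_mat a1 a2" and B: "B \<in> carrier_mat b1 b2"
    and C: "C \<in> carrier_mat a2 a3" and D: "D \<in> carrier_mat b2 b3"
  shows "(A \<otimes>\<^sub>k B) * (C \<otimes>\<^sub>k D) = (A*C) \<otimes>\<^sub>k (B*D)"
proof (rule eq_matI)
  show "dim_row ((A \<otimes>\<^sub>k B) * (C \<otimes>\<^sub>k D)) = dim_row ((A*C) \<otimes>\<^sub>k (B*D))"
    "dim_col ((A \<otimes>\<^sub>k B) * (C \<otimes>\<^sub>k D)) = dim_col ((A*C) \<otimes>\<^sub>k (B*D))" using assms by auto
  fix i j assume i: "i < dim_row ((A*C) \<otimes>\<^sub>k (B*D))" and j: "j < dim_col ((A*C) \<otimes>\<^sub>k (B*D))"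
  hence i': "i < a1*b1" and j': "j < a3*b3" using assms by auto
  note ib = div_mod_bounds[OF i'] and jb = div_mod_bounds[OF j']
  have "((A \<otimes>\<^sub>k B) * (C \<otimes>\<^sub>k D)) $$ (i,j) = (\<Sum>t<a2*b2. (A \<otimes>\<^sub>k B)$$(i,t) * (C \<otimes>\<^sub>k D)$$(t,j))"
    using assms i' j' by (subst mult_entry) auto
  also have "\<dots> = (\<Sum>u<a2. \<Sum>s<b2. (A \<otimes>\<^sub>k B)$$(i,u*b2+s) * (C \<otimes>\<^sub>k D)$$(u*b2+s,j))"
    by (rule sum_split)
  also have "\<dots> = (\<Sum>u<a2. \<Sum>s<b2. (A$$(i div b1, u) * C$$(u, j div b3)) * (B$$(i mod b1, s) * D$$(s, j mod b3)))"
  proof (intro sum.cong refl)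
    fix u s assume u: "u \<in> {..<a2}" and s: "s \<in> {..<b2}"
    have t: "u*b2+s < a2*b2" using u s by (simp add: idx_bound)
    show "(A \<otimes>\<^sub>k B)$$(i,u*b2+s) * (C \<otimes>\<^sub>k D)$$(u*b2+s,j) = (A$$(i div b1, u) * C$$(u, j div b3)) * (B$$(i mod b1, s) * D$$(s, j mod b3))"
      using assms i' j' t s by (simp add: kron_index)
  qed
  also have "\<dots> = (\<Sum>u<a2. A$$(i div b1, u) * C$$(u, j div b3)) * (\<Sum>s<b2. B$$(i mod b1, s) * D$$(s, j mod b3))"
    by (simp add: sum_product)
  also have "\<dots> = ((A*C) \<otimes>\<^sub>k (B*D)) $$ (i,j)"
    using assms i' j' ib jb by (simp add: kron_index scalar_prod_def atLeast0LessThan)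
  finally show "((A \<otimes>\<^sub>k B) * (C \<otimes>\<^sub>k D)) $$ (i,j) = ((A*C) \<otimes>\<^sub>k (B*D)) $$ (i,j)" .
qed

lemma adj_kron: "adj (A \<otimes>\<^sub>k B) = adj A \<otimes>\<^sub>k adj B"
proof (rule eq_matI)
  fix i j assume "i < dim_row (adj A \<otimes>\<^sub>k adj B)" "j < dim_col (adj A \<otimes>\<^sub>k adj B)"
  thus "adj (A \<otimes>\<^sub>k B) $$ (i,j) = (adj A \<otimes>\<^sub>k adj B) $$ (i,j)"
    using div_mod_bounds[of i "dim_col A" "dim_col B"] div_mod_bounds[of j "dim_row A" "dim_row B"]
    by (simp add: kron_index)
qed auto

lemma kron_one: "1\<^sub>m a \<otimes>\<^sub>k 1\<^sub>m b = 1\<^sub>m (a*b)"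
proof (rule eq_matI)
  fix i j assume "i < dim_row (1\<^sub>m (a*b))" "j < dim_col (1\<^sub>m (a*b))"
  hence i: "i < a*b" and j: "j < a*b" by auto
  have "(i div b = j div b \<and> i mod b = j mod b) = (i = j)"
    by (metis div_mult_mod_eq)
  thus "(1\<^sub>m a \<otimes>\<^sub>k 1\<^sub>m b) $$ (i,j) = 1\<^sub>m (a*b) $$ (i,j)"
    using i j div_mod_bounds[OF i] div_mod_bounds[OF j] by (auto simp: kron_index)
qed auto

lemma unitary_mult: "unitary k A \<Longrightarrow> unitary k B \<Longrightarrow> unitary k (A*B)"
  unfolding unitary_def
proof (elim conjE, intro conjI)
  assume A: "A \<in> carrier_mat k k" and B: "B \<in> carrier_mat k k"
    and a1: "adj A * A = 1\<^sub>m k" and a2: "A * adj A = 1\<^sub>m k"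
    and b1: "adj B * B = 1\<^sub>m k" and b2: "B * adj B = 1\<^sub>m k"
  have aA: "adj A \<in> carrier_mat k k" and aB: "adj B \<in> carrier_mat k k" using A B by auto
  show "A * B \<in> carrier_mat k k" using A B by auto
  have "adj (A*B) * (A*B) = adj B * (adj A * A) * B"
    using A B aA aB by (simp add: adj_mult[OF A B] assoc_mult_mat[of _ k k _ k _ k])
  thus "adj (A*B) * (A*B) = 1\<^sub>m k" using a1 b1 B aB by simp
  have "(A*B) * adj (A*B) = A * (B * adj B) * adj A"
    using A B aA aB by (simp add: adj_mult[OF A B] assoc_mult_mat[of _ k k _ k _ k])
  thus "(A*B) * adj (A*B) = 1\<^sub>m k" using a2 b2 A aA by simp
qed

lemma unitary_kron: "unitary a A \<Longrightarrow> unitary b B \<Longrightarrow> unitary (a*b) (A \<otimes>\<^sub>k B)"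
  unfolding unitary_def
proof (elim conjE, intro conjI)
  assume A: "A \<in> carrier_mat a a" and B: "B \<in> carrier_mat b b"
    and a1: "adj A * A = 1\<^sub>m a" and a2: "A * adj A = 1\<^sub>m a"
    and b1: "adj B * B = 1\<^sub>m b" and b2: "B * adj B = 1\<^sub>m b"
  have aA: "adj A \<in> carrier_mat a a" and aB: "adj B \<in> carrier_mat b b" using A B by auto
  show "A \<otimes>\<^sub>k B \<in> carrier_mat (a*b) (a*b)" using A B by auto
  show "adj (A \<otimes>\<^sub>k B) * (A \<otimes>\<^sub>k B) = 1\<^sub>m (a*b)"
    unfolding adj_kron kron_mult[OF aA aB A B] a1 b1 kron_one ..
  show "(A \<otimes>\<^sub>k B) * adj (A \<otimes>\<^sub>k B) = 1\<^sub>m (a*b)"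
    unfolding adj_kron kron_mult[OF A B aA aB] a2 b2 kron_one ..
qed

lemma triple_entry:
  assumes U: "U \<in> carrier_mat k k" and Y: "Y \<in> carrier_mat k k" and r: "r < k" and c: "c < k"
  shows "(U*Y*adj U)$$(r,c) = (\<Sum>j<k. \<Sum>l<k. U$$(r,j)*Y$$(j,l)*cnj (U$$(c,l)))"
proof -
  have "(U*Y*adj U)$$(r,c) = (\<Sum>l<k. (U*Y)$$(r,l) * adj U $$ (l,c))"
    using U Y r c by (subst mult_entry) auto
  also have "\<dots> = (\<Sum>l<k. (\<Sum>j<k. U$$(r,j)*Y$$(j,l)) * cnj (U$$(c,l)))"
    using U Y r c by (intro sum.cong refl) (auto simp: scalar_prod_def atLeast0LessThan)
  also have "\<dots> = (\<Sum>l<k. \<Sum>j<k. U$$(r,j)*Y$$(j,l)*cnj (U$$(c,l)))"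
    by (simp add: sum_distrib_right)
  also have "\<dots> = (\<Sum>j<k. \<Sum>l<k. U$$(r,j)*Y$$(j,l)*cnj (U$$(c,l)))"
    by (rule sum.swap)
  finally show ?thesis .
qed

definition Kern :: "nat \<Rightarrow> (nat \<Rightarrow> real) \<Rightarrow> (nat \<Rightarrow> complex mat) \<Rightarrow> complex mat \<Rightarrow> nat \<Rightarrow> nat \<Rightarrow> nat \<Rightarrow> nat \<Rightarrow> nat \<Rightarrow> complex" where
  "Kern N p U \<rho> e r c u v = (\<Sum>i<N. complex_of_real (p i) *
      (\<Sum>s<e. \<Sum>t<e. U i $$ (r,u*e+s) * \<rho> $$ (s,t) * cnj (U i $$ (c, v*e+t))))"

lemma swap_mid: "(\<Sum>u<a. \<Sum>s<b. \<Sum>v<a'. \<Sum>t<b'. g u s v t) = (\<Sum>u<a. \<Sum>v<a'. \<Sum>s<b. \<Sum>t<b'. (g u s v t :: complex))"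
  by (rule sum.cong[OF refl], rule sum.swap)

lemma swap3: "(\<Sum>i<N. \<Sum>u<a. \<Sum>v<b. h i u v) = (\<Sum>u<a. \<Sum>v<b. \<Sum>i<N. (h i u v :: complex))"
  by (subst sum.swap) (rule sum.cong[OF refl], rule sum.swap)

lemma chan_lin:
  assumes U: "\<forall>i<N. U i \<in> carrier_mat (d*e) (d*e)" and X: "X \<in> carrier_mat d d"
    and \<rho>: "\<rho> \<in> carrier_mat e e" and r: "r < d*e" and c: "c < d*e"
  shows "chan N p U (X \<otimes>\<^sub>k \<rho>) $$ (r,c) = (\<Sum>u<d. \<Sum>v<d. X$$(u,v) * Kern N p U \<rho> e r c u v)"
proof -
  have XR: "X \<otimes>\<^sub>k \<rho> \<in> carrier_mat (d*e) (d*e)" using X \<rho> by auto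
  have "chan N p U (X \<otimes>\<^sub>k \<rho>) $$ (r,c) = (\<Sum>i<N. complex_of_real (p i) * (U i * (X \<otimes>\<^sub>k \<rho>) * adj (U i)) $$ (r,c))"
    using X \<rho> r c by (simp add: chan_def)
  also have "\<dots> = (\<Sum>i<N. complex_of_real (p i) * (\<Sum>j<d*e. \<Sum>l<d*e. U i $$(r,j)*(X \<otimes>\<^sub>k \<rho>)$$(j,l)*cnj (U i $$(c,l))))"
    using U XR r c by (intro sum.cong refl) (simp add: triple_entry)
  also have "\<dots> = (\<Sum>i<N. complex_of_real (p i) * (\<Sum>u<d. \<Sum>s<e. \<Sum>v<d. \<Sum>t<e.
       U i $$(r,u*e+s) * (X$$(u,v) * \<rho>$$(s,t)) * cnj (U i $$(c,v*e+t))))"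
  proof -
    have inner: "\<And>f::nat\<Rightarrow>nat\<Rightarrow>complex. (\<Sum>j<d*e. \<Sum>l<d*e. f j l) = (\<Sum>u<d. \<Sum>s<e. \<Sum>v<d. \<Sum>t<e. f (u*e+s) (v*e+t))"
      by (simp add: sum_split)
    show ?thesis unfolding inner using X \<rho>
      by (auto simp: kron_index idx_bound intro!: sum.cong)
  qed
  also have "\<dots> = (\<Sum>i<N. \<Sum>u<d. \<Sum>v<d. X$$(u,v) * (complex_of_real (p i) * (\<Sum>s<e. \<Sum>t<e.
       U i $$(r,u*e+s) * \<rho>$$(s,t) * cnj (U i $$(c,v*e+t)))))"
    apply (rule sum.cong[OF refl])
    apply (subst swap_mid)
    by (simp add: sum_distrib_left mult_ac)
  also have "\<dots> = (\<Sum>u<d. \<Sum>v<d. X$$(u,v) * Kern N p U \<rho> e r c u v)"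
    unfolding Kern_def by (subst swap3) (simp add: sum_distrib_left)
  finally show ?thesis .
qed

lemma sum2: fixes f :: "nat \<Rightarrow> 'a::comm_monoid_add"
  assumes "a<d" "b<d" "a\<noteq>b" "\<And>w. w<d \<Longrightarrow> w\<noteq>a \<Longrightarrow> w\<noteq>b \<Longrightarrow> f w = 0"
  shows "(\<Sum>w<d. f w) = f a + f b"
proof -
  have "(\<Sum>w<d. f w) = (\<Sum>w\<in>{a,b}. f w)"
    by (rule sum.mono_neutral_right) (use assms in auto)
  thus ?thesis using assms by simp
qed

lemma sum1: fixes f :: "nat \<Rightarrow> 'a::comm_monoid_add"
  assumes "a<d" "\<And>w. w<d \<Longrightarrow> w\<noteq>a \<Longrightarrow> f w = 0"
  shows "(\<Sum>w<d. f w) = f a"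
proof -
  have "(\<Sum>w<d. f w) = (\<Sum>w\<in>{a}. f w)"
    by (rule sum.mono_neutral_right) (use assms in auto)
  thus ?thesis using assms by simp
qed

lemma quad2:
  fixes g :: "nat \<Rightarrow> complex"
  assumes ab: "a<d" "b<d" "a\<noteq>b" and g: "\<And>w. w<d \<Longrightarrow> w\<noteq>a \<Longrightarrow> w\<noteq>b \<Longrightarrow> g w = 0"
  shows "(\<Sum>u<d. \<Sum>v<d. g u * cnj (g v) * K u v) =
     g a * cnj (g a) * K a a + g a * cnj (g b) * K a b + g b * cnj (g a) * K b a + g b * cnj (g b) * K b b"
proof -
  have i: "(\<Sum>v<d. g u * cnj (g v) * K u v) = g u * cnj (g a) * K u a + g u * cnj (g b) * K u b" for u
    by (rule sum2) (use ab g in auto)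
  have "(\<Sum>u<d. \<Sum>v<d. g u * cnj (g v) * K u v) = (\<Sum>u<d. g u * cnj (g a) * K u a + g u * cnj (g b) * K u b)"
    by (simp add: i)
  also have "\<dots> = (g a * cnj (g a) * K a a + g a * cnj (g b) * K a b) + (g b * cnj (g a) * K b a + g b * cnj (g b) * K b b)"
    by (rule sum2) (use ab g in auto)
  finally show ?thesis by (simp add: add_ac)
qed

lemma quad1:
  fixes g :: "nat \<Rightarrow> complex"
  assumes a: "a<d" and g: "\<And>w. w<d \<Longrightarrow> w\<noteq>a \<Longrightarrow> g w = 0"
  shows "(\<Sum>u<d. \<Sum>v<d. g u * cnj (g v) * K u v) = g a * cnj (g a) * K a a"
proof -
  have i: "(\<Sum>v<d. g u * cnj (g v) * K u v) = g u * cnj (g a) * K u a" for u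
    by (rule sum1) (use a g in auto)
  show ?thesis unfolding i by (rule sum1) (use a g in auto)
qed

lemma kern_delta:
  fixes K :: "nat \<Rightarrow> nat \<Rightarrow> complex"
  assumes H: "\<And>\<phi>. \<phi> \<in> pure_states n \<Longrightarrow> (\<Sum>u<2^n. \<Sum>v<2^n. \<phi>$u * cnj (\<phi>$v) * K u v) = z"
    and a: "a < 2^n" and b: "b < 2^n"
  shows "K a b = (if a = b then z else 0)"
proof -
  define d :: nat where "d = 2^n"
  have aa: "K w w = z" if w: "w < d" for w
  proof -
    let ?g = "\<lambda>x. if x = w then (1::complex) else 0"
    have "vec d ?g \<in> pure_states n"
      unfolding pure_states_def d_def[symmetric] using w by (auto simp: sum1[of w])
    from H[OF this] have "(\<Sum>u<d. \<Sum>v<d. ?g u * cnj (?g v) * K u v) = z"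
      unfolding d_def by simp
    thus ?thesis using quad1[of w d ?g K] w by simp
  qed
  show ?thesis
  proof (cases "a = b")
    case True thus ?thesis using aa a d_def by simp
  next
    case False
    define s where "s = complex_of_real (1 / sqrt 2)"
    have ss: "s * s = 1/2" unfolding s_def by (simp flip: of_real_mult)
    have cs: "cnj s = s" unfolding s_def by simp
    have cm: "(cmod s)^2 = 1/2" unfolding s_def by (simp add: norm_divide power_divide)
    have cmi: "(cmod (\<i> * s))^2 = 1/2" using cm by (simp add: norm_mult)
    let ?g1 = "\<lambda>x. if x = a then s else if x = b then s else 0"
    let ?g2 = "\<lambda>x. if x = a then s else if x = b then \<i> * s else 0"
    have ad: "a < d" "b < d" using a b d_def by auto
    have "vec d ?g1 \<in> pure_states n"
      unfolding pure_states_def d_def[symmetric] using ad False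
      by (auto simp: sum2[of a d b] cm)
    from H[OF this] have "(\<Sum>u<d. \<Sum>v<d. ?g1 u * cnj (?g1 v) * K u v) = z"
      unfolding d_def by simp
    hence e1: "s*s*K a a + s*s*K a b + s*s*K b a + s*s*K b b = z"
      using quad2[of a d b ?g1 K] ad False cs by simp
    have "vec d ?g2 \<in> pure_states n"
      unfolding pure_states_def d_def[symmetric] using ad False
      by (auto simp: sum2[of a d b] cm cmi)
    from H[OF this] have "(\<Sum>u<d. \<Sum>v<d. ?g2 u * cnj (?g2 v) * K u v) = z"
      unfolding d_def by simp
    hence e2: "s*s*K a a - \<i>*(s*s)*K a b + \<i>*(s*s)*K b a + s*s*K b b = z"
      using quad2[of a d b ?g2 K] ad False cs by (simp add: algebra_simps)
    have "K a a = z" "K b b = z" using aa ad by auto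
    with e1 e2 ss have "K a b + K b a = 0" "K b a - K a b = 0"
      by (auto simp: algebra_simps)
    hence "K a b = 0"
    proof -
      assume h1: "K a b + K b a = 0" and h2: "K b a - K a b = 0"
      from h2 have "K b a = K a b" by simp
      with h1 have "2 * K a b = 0" by simp
      thus "K a b = 0" by simp
    qed
    thus ?thesis using False by simp
  qed
qed

lemma int_small_mult: fixes k :: int assumes "k * int d = int a' - int a" "a < d" "a' < d" shows "k = 0"
proof (rule ccontr)
  assume k: "k \<noteq> 0"
  show False
  proof (cases "k > 0")
    case True
    hence "k * int d \<ge> int d" by (simp add: mult_le_cancel_right1)
    thus False using assms by linarith
  next
    case False
    hence "k \<le> -1" using k by linarith
    hence "k * int d \<le> - int d" by (metis mult_minus_left mult_right_mono of_nat_0_le_iff mult_1 mult.commute mult_le_cancel_left1 minus_mult_commute)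
    thus False using assms by linarith
  qed
qed

lemma roots_sum:
  assumes a: "a<d" and a': "a'<d"
  shows "(\<Sum>x<d. cis (2*pi*(real a' - real a)*real x/real d)) = (if a = a' then of_nat d else 0)"
proof (cases "a = a'")
  case True thus ?thesis by simp
next
  case False
  define \<theta> where "\<theta> = 2*pi*(real a' - real a)/real d"
  define z where "z = cis \<theta>"
  have d0: "d > 0" using a by simp
  have t: "cis (2*pi*(real a' - real a)*real x/real d) = z^x" for x
    unfolding z_def DeMoivre \<theta>_def by (simp add: field_simps)
  have zd: "z^d = 1"
  proof -
    have e: "real d * \<theta> = 2*pi*of_int (int a' - int a)" unfolding \<theta>_def using d0 by simp
    have "z^d = cis (2*pi*of_int (int a' - int a))" unfolding z_def DeMoivre e ..
    thus ?thesis by simp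
  qed
  have z1: "z \<noteq> 1"
  proof
    assume "z = 1"
    hence "cos \<theta> = 1" unfolding z_def by (metis cis.sel(1) one_complex.sel(1))
    then obtain k :: int where k: "\<theta> = k * 2 * pi" by (auto simp: cos_one_2pi_int)
    have "2*pi*((real a' - real a)/real d) = 2*pi*real_of_int k" using k unfolding \<theta>_def by (simp add: mult_ac)
    hence "(real a' - real a)/real d = real_of_int k" using pi_gt_zero
      by (metis (no_types, opaque_lifting) mult_cancel_left times_divide_eq_right mult_eq_0_iff pi_neq_zero zero_neq_numeral)
    hence "real_of_int k * real d = real a' - real a" using d0 by (simp add: field_simps)
    hence "k * int d = int a' - int a" by (metis of_int_eq_iff of_int_mult of_int_of_nat_eq of_int_diff)
    hence "k = 0" using int_small_mult a a' by blast
    hence "real a' = real a" using k \<theta>_def d0 by simp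
    thus False using False by simp
  qed
  have "(\<Sum>x<d. cis (2*pi*(real a' - real a)*real x/real d)) = (\<Sum>x<d. z^x)" by (simp add: t)
  also have "\<dots> = 0" using z1 zd by (simp add: sum_gp_strict)
  finally show ?thesis using False by simp
qed

lemma mod_add_inj: assumes "b<d" "b'<d" "(x+b) mod d = (x+b') mod (d::nat)" shows "b = b'"
proof -
  have *: "c = c'" if "c<d" "c'<d" "c \<le> c'" "(x+c) mod d = (x+c') mod d" for c c'
  proof -
    from that have "d dvd (x+c') - (x+c)" by (metis mod_eq_dvd_iff_nat add_le_mono1 add_left_mono)
    hence "d dvd c' - c" by simp
    moreover have "c' - c < d" using that by linarith
    ultimately have "c' - c = 0" using nat_dvd_not_less by blast
    thus ?thesis using that by simp
  qed
  show ?thesis using *[of b b'] *[of b' b] assms by (cases "b \<le> b'") auto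
qed

definition ph :: "nat \<Rightarrow> nat \<Rightarrow> nat \<Rightarrow> complex" where
  "ph d a x = cis (2*pi*real a*real x/real d) / complex_of_real (sqrt (real d))"

definition Vb :: "nat \<Rightarrow> complex mat" where
  "Vb d = mat (d*d) (d*d) (\<lambda>(R,C). if R mod d = (R div d + C mod d) mod d then ph d (C div d) (R div d) else 0)"

lemma Vb_carrier: "Vb d \<in> carrier_mat (d*d) (d*d)" by (simp add: Vb_def)

lemma Vb_entry: assumes "x<d" "y<d" "C<d*d"
  shows "Vb d $$ (x*d+y, C) = (if y = (x + C mod d) mod d then ph d (C div d) x else 0)"
proof -
  have "x*d+y < d*d" using assms idx_bound by auto
  thus ?thesis using assms by (simp add: Vb_def)
qed

lemma ph_prod: "cnj (ph d a x) * ph d a' x = cis (2*pi*(real a' - real a)*real x/real d) / of_nat d"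
proof -
  have "cnj (ph d a x) * ph d a' x = (cis (-(2*pi*real a*real x/real d)) * cis (2*pi*real a'*real x/real d)) /
     (complex_of_real (sqrt (real d)) * complex_of_real (sqrt (real d)))"
    unfolding ph_def by (simp add: cis_cnj)
  also have "\<dots> = cis (2*pi*(real a' - real a)*real x/real d) / of_nat d"
    by (simp add: cis_mult flip: of_real_mult) (simp add: algebra_simps diff_divide_distrib)
  finally show ?thesis .
qed

lemma ph_norm: "0 < d \<Longrightarrow> ph d a x * cnj (ph d a x) = 1 / of_nat d"
  using ph_prod[of d a x a] by (simp add: mult.commute)

lemma Vb_adj: assumes d: "0 < d" shows "adj (Vb d) * Vb d = 1\<^sub>m (d*d)"
proof (rule eq_matI)
  fix C C' assume "C < dim_row (1\<^sub>m (d*d))" "C' < dim_col (1\<^sub>m (d*d))"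
  hence C: "C < d*d" and C': "C' < d*d" by auto
  define a b a' b' where "a = C div d" "b = C mod d" "a' = C' div d" "b' = C' mod d"
  have ab: "a < d" "b < d" "a' < d" "b' < d" using C C' div_mod_bounds unfolding a_b_a'_b'_def by blast+
  have "(adj (Vb d) * Vb d) $$ (C,C') = (\<Sum>R<d*d. cnj (Vb d $$ (R,C)) * Vb d $$ (R,C'))"
    using C C' Vb_carrier[of d] by (subst mult_entry) auto
  also have "\<dots> = (\<Sum>x<d. \<Sum>y<d. cnj (Vb d $$ (x*d+y,C)) * Vb d $$ (x*d+y,C'))"
    by (rule sum_split)
  also have "\<dots> = (\<Sum>x<d. if b = b' then cnj (ph d a x) * ph d a' x else 0)"
  proof (rule sum.cong[OF refl])
    fix x assume x: "x \<in> {..<d}"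
    have "(\<Sum>y<d. cnj (Vb d $$ (x*d+y,C)) * Vb d $$ (x*d+y,C')) =
       cnj (Vb d $$ (x*d+(x+b) mod d,C)) * Vb d $$ (x*d+(x+b) mod d,C')"
      by (rule sum1) (use x C C' d in \<open>auto simp: Vb_entry a_b_a'_b'_def\<close>)
    also have "\<dots> = (if b = b' then cnj (ph d a x) * ph d a' x else 0)"
      using x C C' d mod_add_inj[of b d b' x] ab by (auto simp: Vb_entry a_b_a'_b'_def)
    finally show "(\<Sum>y<d. cnj (Vb d $$ (x*d+y,C)) * Vb d $$ (x*d+y,C')) = (if b = b' then cnj (ph d a x) * ph d a' x else 0)" .
  qed
  also have "\<dots> = 1\<^sub>m (d*d) $$ (C,C')"
  proof (cases "b = b'")
    case True
    have "(\<Sum>x<d. cnj (ph d a x) * ph d a' x) = (\<Sum>x<d. cis (2*pi*(real a' - real a)*real x/real d)) / of_nat d"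
      by (simp add: ph_prod sum_divide_distrib)
    also have "\<dots> = (if a = a' then 1 else 0)" using roots_sum[of a d a'] ab d by simp
    finally show ?thesis using True C C' unfolding a_b_a'_b'_def
      by (auto) (metis div_mult_mod_eq)
  next
    case False
    hence "C \<noteq> C'" unfolding a_b_a'_b'_def by auto
    thus ?thesis using False C C' by simp
  qed
  finally show "(adj (Vb d) * Vb d) $$ (C,C') = 1\<^sub>m (d*d) $$ (C,C')" .
qed (auto simp: Vb_def)

lemma Vb_unitary: "0 < d \<Longrightarrow> unitary (d*d) (Vb d)"
  unfolding unitary_def using Vb_adj[of d] Vb_carrier[of d] adj_carrier[OF Vb_carrier[of d]]
    mat_mult_left_right_inverse[of "adj (Vb d)" "d*d" "Vb d"] by auto

lemma Vb_partial: assumes x: "x<d" and x': "x'<d" and k: "k<d*d"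
  shows "(\<Sum>u<d. Vb d $$ (x*d+u,k) * cnj (Vb d $$ (x'*d+u,k))) = (if x = x' then 1 / of_nat d else 0)"
proof -
  define a b where "a = k div d" "b = k mod d"
  have ab: "a < d" "b < d" using k div_mod_bounds unfolding a_b_def by blast+
  have "(\<Sum>u<d. Vb d $$ (x*d+u,k) * cnj (Vb d $$ (x'*d+u,k))) =
     Vb d $$ (x*d+(x+b) mod d,k) * cnj (Vb d $$ (x'*d+(x+b) mod d,k))"
    by (rule sum1) (use x x' k in \<open>auto simp: Vb_entry a_b_def\<close>)
  also have "\<dots> = (if x = x' then 1 / of_nat d else 0)"
    using x x' k ab mod_add_inj[of x d x' b] ph_norm[of d a x]
    by (auto simp: Vb_entry a_b_def add.commute)
  finally show ?thesis .
qed

lemma collapse2: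
  fixes f :: "nat \<Rightarrow> nat \<Rightarrow> nat \<Rightarrow> nat \<Rightarrow> complex"
  assumes x: "x<d" and x': "x'<d" and f: "\<And>y j y' l. y<d \<Longrightarrow> y'<d \<Longrightarrow> j<D \<Longrightarrow> l<D \<Longrightarrow> y\<noteq>x \<or> y'\<noteq>x' \<Longrightarrow> f y j y' l = 0"
  shows "(\<Sum>y<d. \<Sum>j<D. \<Sum>y'<d. \<Sum>l<D. f y j y' l) = (\<Sum>j<D. \<Sum>l<D. f x j x' l)"
proof -
  have "(\<Sum>y<d. \<Sum>j<D. \<Sum>y'<d. \<Sum>l<D. f y j y' l) = (\<Sum>j<D. \<Sum>y'<d. \<Sum>l<D. f x j y' l)"
    by (rule sum1) (use x f in auto)
  also have "\<dots> = (\<Sum>j<D. \<Sum>l<D. f x j x' l)"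
    by (rule sum.cong[OF refl], rule sum1) (use x x' f in auto)
  finally show ?thesis .
qed

lemma block_entry:
  assumes Ui: "Ui \<in> carrier_mat D D" and W: "W \<in> carrier_mat (d*D) (d*D)"
    and x: "x<d" and x': "x'<d" and r: "r<D" and c: "c<D"
  shows "((1\<^sub>m d \<otimes>\<^sub>k Ui) * W * adj (1\<^sub>m d \<otimes>\<^sub>k Ui)) $$ (x*D+r, x'*D+c) =
     (Ui * mat D D (\<lambda>(j,l). W $$ (x*D+j, x'*D+l)) * adj Ui) $$ (r,c)"
proof -
  let ?A = "1\<^sub>m d \<otimes>\<^sub>k Ui"
  let ?B = "mat D D (\<lambda>(j,l). W $$ (x*D+j, x'*D+l))"
  have A: "?A \<in> carrier_mat (d*D) (d*D)" using Ui by auto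
  have Aent: "?A $$ (z*D+q, y*D+j) = (if z = y then Ui$$(q,j) else 0)" if "z<d" "q<D" "y<d" "j<D" for z q y j
    using that Ui idx_bound[of z d q D] idx_bound[of y d j D] by (simp add: kron_index)
  have "(?A * W * adj ?A) $$ (x*D+r, x'*D+c) =
      (\<Sum>J<d*D. \<Sum>L<d*D. ?A$$(x*D+r,J)*W$$(J,L)*cnj (?A$$(x'*D+c,L)))"
    by (rule triple_entry[OF A W]) (use x x' r c idx_bound in auto)
  also have "\<dots> = (\<Sum>y<d. \<Sum>j<D. \<Sum>y'<d. \<Sum>l<D. ?A$$(x*D+r,y*D+j)*W$$(y*D+j,y'*D+l)*cnj (?A$$(x'*D+c,y'*D+l)))"
    by (simp only: sum_split)
  also have "\<dots> = (\<Sum>j<D. \<Sum>l<D. ?A$$(x*D+r,x*D+j)*W$$(x*D+j,x'*D+l)*cnj (?A$$(x'*D+c,x'*D+l)))"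
    by (rule collapse2) (use x x' r c Aent in auto)
  also have "\<dots> = (\<Sum>j<D. \<Sum>l<D. Ui$$(r,j)*?B$$(j,l)*cnj (Ui$$(c,l)))"
    using x x' r c Aent by (intro sum.cong refl) auto
  also have "\<dots> = (Ui * ?B * adj Ui) $$ (r,c)"
    by (rule triple_entry[symmetric]) (use Ui r c in auto)
  finally show ?thesis .
qed

lemma proj_carrier: "\<phi> \<in> carrier_vec k \<Longrightarrow> proj \<phi> \<in> carrier_mat k k"
  by (simp add: proj_def)

lemma chan_trace:
  assumes U: "\<forall>i<N. U i \<in> carrier_mat (d*e) (d*e)" and \<rho>: "\<rho>a \<in> carrier_mat e e" and d: "d = 2^n"
    and H: "\<forall>\<phi>\<in>pure_states n. chan N p U (proj \<phi> \<otimes>\<^sub>k \<rho>a) = \<rho>0"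
    and X: "X \<in> carrier_mat d d" and r: "r < d*e" and c: "c < d*e"
  shows "chan N p U (X \<otimes>\<^sub>k \<rho>a) $$ (r,c) = (\<Sum>u<d. X$$(u,u)) * \<rho>0 $$ (r,c)"
proof -
  let ?K = "Kern N p U \<rho>a e r c"
  have Kd: "?K u v = (if u = v then \<rho>0 $$ (r,c) else 0)" if "u<d" "v<d" for u v
  proof (rule kern_delta[of n])
    fix \<phi> assume \<phi>: "\<phi> \<in> pure_states n"
    hence \<phi>c: "\<phi> \<in> carrier_vec d" using d by (simp add: pure_states_def)
    have "\<rho>0 $$ (r,c) = chan N p U (proj \<phi> \<otimes>\<^sub>k \<rho>a) $$ (r,c)" using H \<phi> by simp
    also have "\<dots> = (\<Sum>u<d. \<Sum>v<d. proj \<phi> $$(u,v) * ?K u v)"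
      by (rule chan_lin[OF U proj_carrier[OF \<phi>c] \<rho> r c])
    also have "\<dots> = (\<Sum>u<d. \<Sum>v<d. \<phi>$u * cnj (\<phi>$v) * ?K u v)"
      using \<phi>c by (intro sum.cong refl) (simp add: proj_def)
    finally show "(\<Sum>u<2^n. \<Sum>v<2^n. \<phi>$u * cnj (\<phi>$v) * ?K u v) = \<rho>0 $$ (r,c)" using d by simp
  qed (use that d in auto)
  have "chan N p U (X \<otimes>\<^sub>k \<rho>a) $$ (r,c) = (\<Sum>u<d. \<Sum>v<d. X$$(u,v) * ?K u v)"
    by (rule chan_lin[OF U X \<rho> r c])
  also have "\<dots> = (\<Sum>u<d. X$$(u,u) * \<rho>0 $$ (r,c))"
  proof (rule sum.cong[OF refl])
    fix u assume u: "u \<in> {..<d}"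
    show "(\<Sum>v<d. X$$(u,v) * ?K u v) = X$$(u,u) * \<rho>0 $$ (r,c)"
      by (subst sum1[of u]) (use u Kd in auto)
  qed
  finally show ?thesis by (simp add: sum_distrib_right)
qed

lemma nid_kron_entry:
  assumes "\<rho> \<in> carrier_mat D D" "x<d" "x'<d" "r<D" "c<D"
  shows "(nid d \<otimes>\<^sub>k \<rho>) $$ (x*D+r, x'*D+c) = (if x = x' then 1 / of_nat d else 0) * \<rho> $$ (r,c)"
  using assms idx_bound[of x d r D] idx_bound[of x' d c D] by (simp add: kron_index nid_def)

lemma G_entry:
  assumes k: "k < d*d" and R: "R < d*d" and C: "C < d*d"
  shows "(Vb d * proj (unit_vec (d*d) k) * adj (Vb d)) $$ (R,C) = Vb d $$ (R,k) * cnj (Vb d $$ (C,k))"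
proof -
  have P: "proj (unit_vec (d*d) k) \<in> carrier_mat (d*d) (d*d)" by (simp add: proj_def)
  have "(Vb d * proj (unit_vec (d*d) k) * adj (Vb d)) $$ (R,C) =
     (\<Sum>j<d*d. \<Sum>l<d*d. Vb d $$ (R,j) * proj (unit_vec (d*d) k) $$ (j,l) * cnj (Vb d $$ (C,l)))"
    by (rule triple_entry[OF Vb_carrier P R C])
  also have "\<dots> = (\<Sum>l<d*d. Vb d $$ (R,k) * proj (unit_vec (d*d) k) $$ (k,l) * cnj (Vb d $$ (C,l)))"
    by (rule sum1) (use k in \<open>auto simp: proj_def\<close>)
  also have "\<dots> = Vb d $$ (R,k) * proj (unit_vec (d*d) k) $$ (k,k) * cnj (Vb d $$ (C,k))"
    by (rule sum1) (use k in \<open>auto simp: proj_def\<close>)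
  also have "\<dots> = Vb d $$ (R,k) * cnj (Vb d $$ (C,k))" using k by (simp add: proj_def)
  finally show ?thesis .
qed

lemma dm_lem: "(0::nat) < e \<Longrightarrow> (x*(d*e)+j) div e = x*d + j div e \<and> (x*(d*e)+j) mod e = j mod e"
proof -
  assume e: "0 < e"
  have eq: "x*(d*e)+j = j + (x*d)*e" by (simp add: mult_ac)
  show ?thesis unfolding eq using e by (simp only: div_mult_self1 mod_mult_self1)
qed

lemma chan_output:
  assumes U: "\<forall>i<N. U i \<in> carrier_mat (d*e) (d*e)" and \<rho>: "\<rho>a \<in> carrier_mat e e" and d: "d = 2^n"
    and H: "\<forall>\<phi>\<in>pure_states n. chan N p U (proj \<phi> \<otimes>\<^sub>k \<rho>a) = \<rho>0"
    and \<rho>0: "\<rho>0 \<in> carrier_mat (d*e) (d*e)" and k: "k < d*d"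
  shows "chan N p (\<lambda>i. (1\<^sub>m d \<otimes>\<^sub>k U i) * (Vb d \<otimes>\<^sub>k 1\<^sub>m e)) (proj (unit_vec (d*d) k) \<otimes>\<^sub>k \<rho>a) = nid d \<otimes>\<^sub>k \<rho>0"
proof -
  define D where "D = d*e"
  define M where "M = d*d*e"
  have MD: "d*D = M" "d*d*e = M" "d*(d*e) = M" unfolding M_def D_def by (auto simp: mult_ac)
  define P where "P = proj (unit_vec (d*d) k)"
  define G where "G = Vb d * P * adj (Vb d)"
  define W where "W = G \<otimes>\<^sub>k \<rho>a"
  have P: "P \<in> carrier_mat (d*d) (d*d)" unfolding P_def by (simp add: proj_def)
  have Q: "P \<otimes>\<^sub>k \<rho>a \<in> carrier_mat M M" using P \<rho> MD by (metis kron_carrier)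
  have V: "Vb d \<in> carrier_mat (d*d) (d*d)" by (rule Vb_carrier)
  have aV: "adj (Vb d) \<in> carrier_mat (d*d) (d*d)" using V by auto
  have G: "G \<in> carrier_mat (d*d) (d*d)" unfolding G_def using V P aV by auto
  have W: "W \<in> carrier_mat M M" unfolding W_def using G \<rho> MD by (metis kron_carrier)
  have B: "Vb d \<otimes>\<^sub>k 1\<^sub>m e \<in> carrier_mat M M" using V MD by (metis kron_carrier one_carrier_mat)
  have aB: "adj (Vb d \<otimes>\<^sub>k 1\<^sub>m e) = adj (Vb d) \<otimes>\<^sub>k 1\<^sub>m e" by (simp add: adj_kron)
  have aBc: "adj (Vb d) \<otimes>\<^sub>k 1\<^sub>m e \<in> carrier_mat M M" using aV MD by (metis kron_carrier one_carrier_mat)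
  have BQ: "(Vb d \<otimes>\<^sub>k 1\<^sub>m e) * (P \<otimes>\<^sub>k \<rho>a) = (Vb d * P) \<otimes>\<^sub>k \<rho>a"
    using kron_mult[OF V one_carrier_mat P \<rho>] \<rho> by simp
  have BQB: "((Vb d * P) \<otimes>\<^sub>k \<rho>a) * (adj (Vb d) \<otimes>\<^sub>k 1\<^sub>m e) = W"
    using kron_mult[of "Vb d * P" "d*d" "d*d" \<rho>a e e "adj (Vb d)" "d*d" "1\<^sub>m e" e] V P aV \<rho>
    unfolding W_def G_def by simp
  have conj: "((1\<^sub>m d \<otimes>\<^sub>k U i) * (Vb d \<otimes>\<^sub>k 1\<^sub>m e)) * (P \<otimes>\<^sub>k \<rho>a) * adj ((1\<^sub>m d \<otimes>\<^sub>k U i) * (Vb d \<otimes>\<^sub>k 1\<^sub>m e))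
     = (1\<^sub>m d \<otimes>\<^sub>k U i) * W * adj (1\<^sub>m d \<otimes>\<^sub>k U i)" if i: "i < N" for i
  proof -
    let ?A = "1\<^sub>m d \<otimes>\<^sub>k U i" and ?B = "Vb d \<otimes>\<^sub>k 1\<^sub>m e" and ?Q = "P \<otimes>\<^sub>k \<rho>a"
    have A: "?A \<in> carrier_mat M M" using U i MD by (metis kron_carrier one_carrier_mat)
    have aA: "adj ?A \<in> carrier_mat M M" by (rule adj_carrier[OF A])
    have BQc: "?B * ?Q \<in> carrier_mat M M" using B Q by auto
    have "(?A * ?B) * ?Q * adj (?A * ?B) = (?A * ?B) * ?Q * (adj ?B * adj ?A)"
      by (simp add: adj_mult[OF A B])
    also have "\<dots> = ?A * ((?B * ?Q) * adj ?B) * adj ?A"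
      using A B Q aA aBc BQc aB
      by (simp add: assoc_mult_mat[of _ M M _ M _ M])
    also have "\<dots> = ?A * W * adj ?A" by (simp add: aB BQ BQB)
    finally show ?thesis .
  qed
  show ?thesis
  proof (rule eq_matI)
    show "dim_row (chan N p (\<lambda>i. (1\<^sub>m d \<otimes>\<^sub>k U i) * (Vb d \<otimes>\<^sub>k 1\<^sub>m e)) (proj (unit_vec (d*d) k) \<otimes>\<^sub>k \<rho>a)) = dim_row (nid d \<otimes>\<^sub>k \<rho>0)"
      "dim_col (chan N p (\<lambda>i. (1\<^sub>m d \<otimes>\<^sub>k U i) * (Vb d \<otimes>\<^sub>k 1\<^sub>m e)) (proj (unit_vec (d*d) k) \<otimes>\<^sub>k \<rho>a)) = dim_col (nid d \<otimes>\<^sub>k \<rho>0)"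
      using \<rho> \<rho>0 by (auto simp: chan_def proj_def nid_def mult_ac)
    fix R C assume "R < dim_row (nid d \<otimes>\<^sub>k \<rho>0)" "C < dim_col (nid d \<otimes>\<^sub>k \<rho>0)"
    hence R: "R < d*D" and C: "C < d*D" using \<rho>0 D_def by (auto simp: nid_def)
    define x r x' c where "x = R div D" "r = R mod D" "x' = C div D" "c = C mod D"
    have xr: "x < d" "r < D" "x' < d" "c < D" using div_mod_bounds[OF R] div_mod_bounds[OF C] x_r_x'_c_def by auto
    have RC: "R = x*D+r" "C = x'*D+c" using x_r_x'_c_def by auto
    have e0: "0 < e" using xr D_def by (cases "e = 0") auto
    define Mx where "Mx = mat d d (\<lambda>(u,v). G $$ (x*d+u, x'*d+v))"
    have Mx: "Mx \<in> carrier_mat d d" unfolding Mx_def by simp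
    have Bk: "mat D D (\<lambda>(j,l). W $$ (x*D+j, x'*D+l)) = Mx \<otimes>\<^sub>k \<rho>a"
    proof (rule eq_matI)
      fix j l assume "j < dim_row (Mx \<otimes>\<^sub>k \<rho>a)" "l < dim_col (Mx \<otimes>\<^sub>k \<rho>a)"
      hence j: "j < d*e" and l: "l < d*e" using Mx \<rho> by auto
      have jl: "j div e < d" "l div e < d" using div_mod_bounds[OF j] div_mod_bounds[OF l] by auto
      have b1: "x*D+j < d*d*e" "x'*D+l < d*d*e" using idx_bound[OF xr(1), of j D] idx_bound[OF xr(3), of l D] j l MD D_def by auto
      show "mat D D (\<lambda>(j,l). W $$ (x*D+j, x'*D+l)) $$ (j,l) = (Mx \<otimes>\<^sub>k \<rho>a) $$ (j,l)"
        using j l jl b1 G \<rho> Mx e0 dm_lem[OF e0, of x d j] dm_lem[OF e0, of x' d l]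
        unfolding W_def D_def by (simp add: kron_index Mx_def)
    qed (use Mx \<rho> D_def in auto)
    have "chan N p (\<lambda>i. (1\<^sub>m d \<otimes>\<^sub>k U i) * (Vb d \<otimes>\<^sub>k 1\<^sub>m e)) (P \<otimes>\<^sub>k \<rho>a) $$ (R,C) =
       (\<Sum>i<N. complex_of_real (p i) * (((1\<^sub>m d \<otimes>\<^sub>k U i) * (Vb d \<otimes>\<^sub>k 1\<^sub>m e)) * (P \<otimes>\<^sub>k \<rho>a) * adj ((1\<^sub>m d \<otimes>\<^sub>k U i) * (Vb d \<otimes>\<^sub>k 1\<^sub>m e))) $$ (R,C))"
      using R C P \<rho> MD by (simp add: chan_def)
    also have "\<dots> = (\<Sum>i<N. complex_of_real (p i) * (U i * (Mx \<otimes>\<^sub>k \<rho>a) * adj (U i)) $$ (r,c))"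
    proof (rule sum.cong[OF refl])
      fix i assume i: "i \<in> {..<N}"
      have Ui: "U i \<in> carrier_mat D D" using U i D_def by auto
      have W': "W \<in> carrier_mat (d*D) (d*D)" using W MD by simp
      show "complex_of_real (p i) * (((1\<^sub>m d \<otimes>\<^sub>k U i) * (Vb d \<otimes>\<^sub>k 1\<^sub>m e)) * (P \<otimes>\<^sub>k \<rho>a) * adj ((1\<^sub>m d \<otimes>\<^sub>k U i) * (Vb d \<otimes>\<^sub>k 1\<^sub>m e))) $$ (R,C)
        = complex_of_real (p i) * (U i * (Mx \<otimes>\<^sub>k \<rho>a) * adj (U i)) $$ (r,c)"
        using conj[of i] i block_entry[OF Ui W' xr(1) xr(3) xr(2) xr(4)] RC Bk by simp
    qed
    also have "\<dots> = chan N p U (Mx \<otimes>\<^sub>k \<rho>a) $$ (r,c)"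
      using xr Mx \<rho> D_def by (simp add: chan_def)
    also have "\<dots> = (\<Sum>u<d. Mx$$(u,u)) * \<rho>0 $$ (r,c)"
      by (rule chan_trace[OF U \<rho> d H Mx]) (use xr D_def in auto)
    also have "(\<Sum>u<d. Mx$$(u,u)) = (\<Sum>u<d. Vb d $$ (x*d+u,k) * cnj (Vb d $$ (x'*d+u,k)))"
      unfolding Mx_def G_def P_def using xr k
      by (intro sum.cong refl) (auto simp: G_entry idx_bound)
    also have "\<dots> = (if x = x' then 1 / of_nat d else 0)" by (rule Vb_partial[OF xr(1) xr(3) k])
    also have "(if x = x' then 1 / of_nat d else 0) * \<rho>0 $$ (r,c) = (nid d \<otimes>\<^sub>k \<rho>0) $$ (R,C)"
      unfolding RC using nid_kron_entry[of \<rho>0 D x d x' r c] \<rho>0 xr D_def by simp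
    finally show "chan N p (\<lambda>i. (1\<^sub>m d \<otimes>\<^sub>k U i) * (Vb d \<otimes>\<^sub>k 1\<^sub>m e)) (proj (unit_vec (d*d) k) \<otimes>\<^sub>k \<rho>a) $$ (R,C) = (nid d \<otimes>\<^sub>k \<rho>0) $$ (R,C)"
      unfolding P_def .
  qed
qed

lemma density_nid_kron:
  assumes \<rho>0: "density m \<rho>0" and d: "d = 2^n"
  shows "density (n+m) (nid d \<otimes>\<^sub>k \<rho>0)"
proof -
  define D where "D = (2::nat)^m"
  have nm: "(2::nat)^(n+m) = d*D" unfolding d D_def by (simp add: power_add)
  have d0: "0 < d" using d by simp
  have C: "\<rho>0 \<in> carrier_mat D D" and A: "adj \<rho>0 = \<rho>0"
    and P: "\<And>v. v \<in> carrier_vec D \<Longrightarrow> 0 \<le> Re (\<Sum>i<D. \<Sum>j<D. cnj (v $ i) * \<rho>0 $$ (i,j) * v $ j)"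
    and T: "trace_mat \<rho>0 = 1"
    using \<rho>0 unfolding density_def D_def by auto
  have nidc: "nid d \<in> carrier_mat d d" by (simp add: nid_def)
  have X: "nid d \<otimes>\<^sub>k \<rho>0 \<in> carrier_mat (d*D) (d*D)" using nidc C by (metis kron_carrier)
  have an: "adj (nid d) = nid d" by (rule eq_matI) (auto simp: nid_def)
  have ent: "(nid d \<otimes>\<^sub>k \<rho>0) $$ (x*D+r, x'*D+c) = (if x = x' then 1 / of_nat d else 0) * \<rho>0 $$ (r,c)"
    if "x<d" "x'<d" "r<D" "c<D" for x x' r c
    using nid_kron_entry[OF C that] .
  have psd: "0 \<le> Re (\<Sum>i<d*D. \<Sum>j<d*D. cnj (v $ i) * (nid d \<otimes>\<^sub>k \<rho>0) $$ (i,j) * v $ j)"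
    if v: "v \<in> carrier_vec (d*D)" for v
  proof -
    let ?w = "\<lambda>x. vec D (\<lambda>r. v $ (x*D+r))"
    let ?q = "\<lambda>x. (\<Sum>r<D. \<Sum>c<D. cnj (?w x $ r) * \<rho>0 $$ (r,c) * ?w x $ c)"
    have "(\<Sum>i<d*D. \<Sum>j<d*D. cnj (v $ i) * (nid d \<otimes>\<^sub>k \<rho>0) $$ (i,j) * v $ j) =
      (\<Sum>x<d. \<Sum>r<D. \<Sum>x'<d. \<Sum>c<D. cnj (v $ (x*D+r)) * (nid d \<otimes>\<^sub>k \<rho>0) $$ (x*D+r,x'*D+c) * v $ (x'*D+c))"
      by (simp only: sum_split)
    also have "\<dots> = (\<Sum>x<d. \<Sum>r<D. \<Sum>c<D. cnj (v $ (x*D+r)) * (nid d \<otimes>\<^sub>k \<rho>0) $$ (x*D+r,x*D+c) * v $ (x*D+c))"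
    proof (rule sum.cong[OF refl], rule sum.cong[OF refl])
      fix x r assume x: "x \<in> {..<d}" and r: "r \<in> {..<D}"
      show "(\<Sum>x'<d. \<Sum>c<D. cnj (v $ (x*D+r)) * (nid d \<otimes>\<^sub>k \<rho>0) $$ (x*D+r,x'*D+c) * v $ (x'*D+c)) =
        (\<Sum>c<D. cnj (v $ (x*D+r)) * (nid d \<otimes>\<^sub>k \<rho>0) $$ (x*D+r,x*D+c) * v $ (x*D+c))"
        by (rule sum1) (use x r ent in auto)
    qed
    also have "\<dots> = (\<Sum>x<d. complex_of_real (1 / real d) * ?q x)"
      using ent by (simp add: sum_distrib_left mult_ac)
    finally have eq: "(\<Sum>i<d*D. \<Sum>j<d*D. cnj (v $ i) * (nid d \<otimes>\<^sub>k \<rho>0) $$ (i,j) * v $ j) = (\<Sum>x<d. complex_of_real (1 / real d) * ?q x)" .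
    have "0 \<le> (\<Sum>x<d. (1 / real d) * Re (?q x))"
    proof (intro sum_nonneg mult_nonneg_nonneg)
      fix x show "0 \<le> Re (?q x)" by (rule P) simp
    qed simp
    also have "\<dots> = Re (\<Sum>x<d. complex_of_real (1 / real d) * ?q x)" by (simp add: Re_sum)
    finally show ?thesis unfolding eq .
  qed
  have tr: "trace_mat (nid d \<otimes>\<^sub>k \<rho>0) = 1"
  proof -
    have "trace_mat (nid d \<otimes>\<^sub>k \<rho>0) = (\<Sum>i<d*D. (nid d \<otimes>\<^sub>k \<rho>0) $$ (i,i))"
      using nidc C by (simp add: trace_mat_def)
    also have "\<dots> = (\<Sum>x<d. \<Sum>r<D. (nid d \<otimes>\<^sub>k \<rho>0) $$ (x*D+r,x*D+r))" by (rule sum_split)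
    also have "\<dots> = (\<Sum>x<d. (1 / of_nat d) * trace_mat \<rho>0)"
      using ent C by (simp add: trace_mat_def sum_distrib_left)
    also have "\<dots> = 1" using T d0 by simp
    finally show ?thesis .
  qed
  show ?thesis unfolding density_def nm
    using X psd tr by (simp add: adj_kron an A)
qed

lemma unitary_one: "unitary k (1\<^sub>m k)" by (simp add: unitary_def)

theorem theorem6:
  fixes m n N :: nat and p :: "nat \<Rightarrow> real" and U :: "nat \<Rightarrow> complex mat"
    and \<rho>a \<rho>0 :: "complex mat"
  assumes "1 \<le> n" and "n \<le> m"
    and "PQC m n (pure_states n) N p U \<rho>a \<rho>0"
  shows "\<exists>U' :: nat \<Rightarrow> complex mat.
           (\<forall>i<N. unitary (2^(n+m)) (U' i)) \<and>
           PQC (n + m) (2*n) (comp_basis (2*n) (2^(2*n))) N p U' \<rho>a (nid (2^n) \<otimes>\<^sub>k \<rho>0)"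
proof -
  define d e where "d = (2::nat)^n" "e = (2::nat)^(m-n)"
  have nm: "n \<le> m" by fact
  have PQ: "(\<forall>i<N. 0 \<le> p i \<and> unitary (2^m) (U i))" "(\<Sum>i<N. p i) = 1"
    "density (m - n) \<rho>a" "density m \<rho>0"
    "\<forall>\<phi>\<in>pure_states n. chan N p U (proj \<phi> \<otimes>\<^sub>k \<rho>a) = \<rho>0"
    using assms(3) unfolding PQC_def by auto
  have me: "(2::nat)^m = d*e" unfolding d_e_def using nm by (metis le_add_diff_inverse power_add)
  have "(2::nat)^(n+m) = d * 2^m" unfolding d_e_def by (simp add: power_add)
  hence nme: "(2::nat)^(n+m) = d*d*e" using me by (simp add: mult.assoc)
  have nn: "(2::nat)^(2*n) = d*d" unfolding d_e_def by (simp add: power_add mult_2)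
  have ex: "n + m - 2*n = m - n" by simp
  have d0: "0 < d" unfolding d_e_def by simp
  have U: "\<forall>i<N. U i \<in> carrier_mat (d*e) (d*e)" using PQ(1) me unfolding unitary_def by metis
  have \<rho>: "\<rho>a \<in> carrier_mat e e" using PQ(3) unfolding density_def d_e_def by simp
  have \<rho>0: "\<rho>0 \<in> carrier_mat (d*e) (d*e)" using PQ(4) me unfolding density_def by metis
  define U' where "U' = (\<lambda>i. (1\<^sub>m d \<otimes>\<^sub>k U i) * (Vb d \<otimes>\<^sub>k 1\<^sub>m e))"
  have uni: "unitary (2^(n+m)) (U' i)" if i: "i < N" for i
  proof -
    have "unitary (d*(d*e)) (1\<^sub>m d \<otimes>\<^sub>k U i)"
      using unitary_kron[OF unitary_one, of "d*e" "U i" d] PQ(1) i me by metis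
    hence 1: "unitary (d*d*e) (1\<^sub>m d \<otimes>\<^sub>k U i)" by (simp add: mult.assoc)
    have 2: "unitary (d*d*e) (Vb d \<otimes>\<^sub>k 1\<^sub>m e)"
      using unitary_kron[OF Vb_unitary[OF d0] unitary_one] .
    show ?thesis unfolding nme U'_def by (rule unitary_mult[OF 1 2])
  qed
  have cb: "comp_basis (2*n) (2^(2*n)) \<subseteq> pure_states (2*n)"
  proof
    fix \<phi> assume "\<phi> \<in> comp_basis (2*n) (2^(2*n))"
    then obtain k where k: "k < 2^(2*n)" and \<phi>: "\<phi> = unit_vec (2^(2*n)) k" unfolding comp_basis_def by auto
    have "(\<Sum>i<2^(2*n). (cmod (\<phi> $ i))^2) = (cmod (\<phi> $ k))^2"
      by (rule sum1) (use k \<phi> in auto)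
    also have "\<dots> = 1" using k \<phi> by simp
    finally show "\<phi> \<in> pure_states (2*n)" unfolding pure_states_def using \<phi> by simp
  qed
  have out: "\<forall>\<phi>\<in>comp_basis (2*n) (2^(2*n)). chan N p U' (proj \<phi> \<otimes>\<^sub>k \<rho>a) = nid (2^n) \<otimes>\<^sub>k \<rho>0"
  proof
    fix \<phi> assume "\<phi> \<in> comp_basis (2*n) (2^(2*n))"
    then obtain k where k: "k < d*d" and \<phi>: "\<phi> = unit_vec (d*d) k" unfolding comp_basis_def nn by auto
    show "chan N p U' (proj \<phi> \<otimes>\<^sub>k \<rho>a) = nid (2^n) \<otimes>\<^sub>k \<rho>0"
      unfolding \<phi> U'_def d_e_def(1)[symmetric]
      by (rule chan_output[OF U \<rho> d_e_def(1) PQ(5) \<rho>0 k])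
  qed
  have den: "density (n+m) (nid (2^n) \<otimes>\<^sub>k \<rho>0)"
    by (rule density_nid_kron[OF PQ(4) refl])
  show ?thesis
    apply (rule exI[of _ U'])
    unfolding PQC_def ex
    using uni PQ(1,2,3) cb out den nm by auto
qed

end
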